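(* Let $n\ge2$, $\lambda_0\in\mathbb D\setminus\{0\}$, $y^0=(y_1^0,\dots,y_{n-1}^0,q^0)\in\widetilde{\mathbb G}_n$, and $j\in\{1,\dots,[n/2]\}$. Suppose $y^0_jy^0_{n-j}\ne\binom nj^2q^0$, $|y^0_{n-j}|\le|y^0_j|$ and $\|\Phi_j(\cdot,y^0)\|_{H^\infty}\le|\lambda_0|$. Let $w_j\in\mathbb C$ satisfy $w_j^2=\frac{y^0_jy^0_{n-j}-\binom nj^2q^0}{\binom nj^2\lambda_0}$ and let $Z_j=\begin{bmatrix}\frac{y^0_j}{\binom nj\lambda_0}&w_j\\ w_j&\frac{y^0_{n-j}}{\binom nj}\end{bmatrix}$. Then $\|Z_j\|\le1$, and $\|Z_j\|=1$ if and only if $\|\Phi_j(\cdot,y^0)\|_{H^\infty}=|\lambda_0|$.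
   Context: $\mathbb D$ open unit disc, $\|\cdot\|$ operator norm. $\widetilde{\mathbb G}_n=\{(y_1,\dots,y_{n-1},q)\in\mathbb C^n: q\in\mathbb D,\ y_j=\beta_j+\bar\beta_{n-j}q$ with $\beta_j\in\mathbb C$, $|\beta_j|+|\beta_{n-j}|<\binom nj$, $j=1,\dots,n-1\}$. For $y=(y_1,\dots,y_{n-1},q)$, $z\in\mathbb C$: $\Phi_j(z,y)=\frac{\binom nj qz-y_j}{y_{n-j}z-\binom nj}$ if $y_{n-j}z\ne\binom nj$ and $y_jy_{n-j}\ne\binom nj^2q$, and $\Phi_j(z,y)=y_j/\binom nj$ if $y_jy_{n-j}=\binom nj^2q$; $\|\Phi_j(\cdot,y)\|_{H^\infty}=\sup_{z\in\mathbb D}|\Phi_j(z,y)|$. *)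

theory Defs
  imports "HOL-Analysis.Analysis"
begin

text \<open>A point of \<open>\<complex>^n\<close> is written \<open>(y_1,...,y_{n-1},q)\<close>; we represent it by a
  function \<open>y :: nat \<Rightarrow> complex\<close> (only the values \<open>y 1, ..., y (n-1)\<close> matter)
  together with the last coordinate \<open>q\<close>.\<close>

definition in_Gtilde :: "nat \<Rightarrow> (nat \<Rightarrow> complex) \<Rightarrow> complex \<Rightarrow> bool" where
  "in_Gtilde n y q \<longleftrightarrow> norm q < 1 \<and>
     (\<exists>\<beta> :: nat \<Rightarrow> complex. \<forall>j\<in>{1..n-1}.
        y j = \<beta> j + cnj (\<beta> (n - j)) * q \<and>
        norm (\<beta> j) + norm (\<beta> (n - j)) < real (n choose j))"

definition Phi :: "nat \<Rightarrow> nat \<Rightarrow> complex \<Rightarrow> (nat \<Rightarrow> complex) \<Rightarrow> complex \<Rightarrow> complex" where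
  "Phi n j z y q =
     (if y j * y (n - j) = of_nat (n choose j) ^ 2 * q
      then y j / of_nat (n choose j)
      else (of_nat (n choose j) * q * z - y j) / (y (n - j) * z - of_nat (n choose j)))"

definition Phi_Hinf_norm :: "nat \<Rightarrow> nat \<Rightarrow> (nat \<Rightarrow> complex) \<Rightarrow> complex \<Rightarrow> real" where
  "Phi_Hinf_norm n j y q = (SUP z\<in>ball (0::complex) 1. norm (Phi n j z y q))"

definition mat_opnorm :: "complex^'n^'m \<Rightarrow> real" where
  "mat_opnorm A = onorm (\<lambda>v. A *v v)"

definition mat2 :: "complex \<Rightarrow> complex \<Rightarrow> complex \<Rightarrow> complex \<Rightarrow> complex^2^2" where
  "mat2 a b c d = (\<chi> i k. if i = 1 then (if k = 1 then a else b) else (if k = 1 then c else d))"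

end

theory Submission
  imports Defs
begin


lemma expand2:
  fixes a b c d v1 v2 :: complex
  shows "(norm (a* v1 + b* v2))^2 + (norm (c* v1+d* v2))^2 =
    ((norm a)^2 + (norm c)^2) * (norm v1)^2 + ((norm b)^2 + (norm d)^2) * (norm v2)^2
    + 2 * Re ((cnj a * b + cnj c * d) * cnj v1 * v2)"
  unfolding cmod_power2 by (simp add: power2_eq_square algebra_simps)

lemma det2:
  fixes a b c d :: complex
  shows "((norm a)^2 + (norm c)^2) * ((norm b)^2 + (norm d)^2) - (norm (cnj a * b + cnj c * d))^2
     = (norm (a*d - b*c))^2"
  unfolding cmod_power2 by (simp add: power2_eq_square algebra_simps)

lemma normvec2: "(norm (v::complex^2))^2 = (norm (v$1))^2 + (norm (v$2))^2"
  by (simp add: norm_vec_def L2_set_def sum_2)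

lemma mat2_mult: "mat2 a b c d *v v = (\<chi> i. if i = 1 then a * v$1 + b * v$2 else c * v$1 + d * v$2)"
  by (simp add: mat2_def matrix_vector_mult_def sum_2 vec_eq_iff)

lemma qf_ineq:
  fixes A B m x y :: real
  assumes "A \<ge> 0" "B \<ge> 0" "A * B \<ge> m^2" "m \<ge> 0" "x \<ge> 0" "y \<ge> 0"
  shows "2 * m * x * y \<le> A * x^2 + B * y^2"
proof (cases "A = 0")
  case True
  then have "m^2 \<le> 0" using assms by simp
  then have "m = 0" by simp
  then show ?thesis using assms by simp
next
  case False
  then have Ap: "A > 0" using assms by simp
  have "A * (A * x^2 + B * y^2 - 2 * m * x * y) = (A*x - m*y)^2 + (A*B - m^2) * y^2"
    by (simp add: power2_eq_square algebra_simps)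
  also have "\<dots> \<ge> 0" using assms by simp
  finally have "A * (A * x^2 + B * y^2 - 2 * m * x * y) \<ge> 0" .
  then have "A * x^2 + B * y^2 - 2 * m * x * y \<ge> 0" using Ap
    by (simp add: zero_le_mult_iff)
  then show ?thesis by simp
qed

lemma mat2_bound:
  fixes a b c d :: complex and k :: real and v :: "complex^2"
  assumes "k \<ge> 0"
    and "2*k \<ge> (norm a)^2 + (norm c)^2 + (norm b)^2 + (norm d)^2"
    and "k^2 - ((norm a)^2 + (norm c)^2 + (norm b)^2 + (norm d)^2) * k + (norm (a*d - b*c))^2 \<ge> 0"
  shows "(norm (mat2 a b c d *v v))^2 \<le> k * (norm v)^2"
proof -
  define p11 where "p11 = (norm a)^2 + (norm c)^2"
  define p22 where "p22 = (norm b)^2 + (norm d)^2"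
  define p12 where "p12 = cnj a * b + cnj c * d"
  define A where "A = k - p11"
  define B where "B = k - p22"
  have det: "p11 * p22 - (norm p12)^2 = (norm (a*d - b*c))^2"
    unfolding p11_def p22_def p12_def by (rule det2)
  have AB: "A * B \<ge> (norm p12)^2"
    using assms(3) det unfolding A_def B_def p11_def p22_def by (simp add: algebra_simps power2_eq_square)
  have ApB: "A + B \<ge> 0" using assms(2) unfolding A_def B_def p11_def p22_def by simp
  have A0: "A \<ge> 0" and B0: "B \<ge> 0"
  proof -
    have "A * B \<ge> 0" using AB by (meson order_trans zero_le_power2)
    then show "A \<ge> 0" "B \<ge> 0" using ApB by (auto simp: zero_le_mult_iff)
  qed
  have e: "(norm (mat2 a b c d *v v))^2 = p11 * (norm (v$1))^2 + p22 * (norm (v$2))^2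
      + 2 * Re (p12 * cnj (v$1) * v$2)"
    unfolding mat2_mult normvec2 p11_def p22_def p12_def by (simp add: expand2)
  have "Re (p12 * cnj (v$1) * v$2) \<le> norm p12 * norm (v$1) * norm (v$2)"
    by (metis complex_Re_le_cmod complex_mod_cnj norm_mult)
  moreover have "2 * norm p12 * norm (v$1) * norm (v$2) \<le> A * (norm (v$1))^2 + B * (norm (v$2))^2"
    by (rule qf_ineq[OF A0 B0 AB]) auto
  ultimately have "(norm (mat2 a b c d *v v))^2 \<le> (p11 + A) * (norm (v$1))^2 + (p22 + B) * (norm (v$2))^2"
    unfolding e by (simp add: algebra_simps)
  also have "\<dots> = k * (norm v)^2" unfolding normvec2 A_def B_def by (simp add: algebra_simps)
  finally show ?thesis .
qed

lemma mat2_attain: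
  fixes a b c d :: complex
  assumes "2 \<ge> (norm a)^2 + (norm c)^2 + (norm b)^2 + (norm d)^2"
    and "1 - ((norm a)^2 + (norm c)^2 + (norm b)^2 + (norm d)^2) + (norm (a*d - b*c))^2 = 0"
  shows "\<exists>v. v \<noteq> 0 \<and> norm (mat2 a b c d *v v) = norm v"
proof -
  define p11 where "p11 = (norm a)^2 + (norm c)^2"
  define p22 where "p22 = (norm b)^2 + (norm d)^2"
  define p12 where "p12 = cnj a * b + cnj c * d"
  define A where "A = 1 - p11"
  define B where "B = 1 - p22"
  have det: "p11 * p22 - (norm p12)^2 = (norm (a*d - b*c))^2"
    unfolding p11_def p22_def p12_def by (rule det2)
  have AB: "A * B = (norm p12)^2"
    using assms(2) det unfolding A_def B_def p11_def p22_def by (simp add: algebra_simps power2_eq_square)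
  have e: "\<And>v. (norm (mat2 a b c d *v v))^2 = p11 * (norm (v$1))^2 + p22 * (norm (v$2))^2
      + 2 * Re (p12 * cnj (v$1) * v$2)"
    unfolding mat2_mult normvec2 p11_def p22_def p12_def by (simp add: expand2)
  show ?thesis
  proof (cases "A = 0")
    case True
    define v :: "complex^2" where "v = (\<chi> i. if i = 1 then 1 else 0)"
    have v1: "v$1 = 1" "v$2 = 0" unfolding v_def by auto
    have "(norm (mat2 a b c d *v v))^2 = (norm v)^2"
      unfolding e using True unfolding A_def by (simp add: normvec2 v1)
    then have "norm (mat2 a b c d *v v) = norm v" by (simp add: power2_eq_iff_nonneg)
    moreover have "v \<noteq> 0" using v1 by (metis zero_index zero_neq_one)
    ultimately show ?thesis by blast
  next
    case False
    define v :: "complex^2" where "v = (\<chi> i. if i = 1 then p12 / of_real A else 1)"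
    have v1: "v$1 = p12 / of_real A" "v$2 = 1" unfolding v_def by auto
    have r: "Re (p12 * cnj (p12 / of_real A)) = (norm p12)^2 / A"
    proof -
      have "p12 * cnj (p12 / of_real A) = of_real ((norm p12)^2 / A)"
        by (simp add: complex_norm_square[symmetric])
      then show ?thesis by (metis Re_complex_of_real)
    qed
    have e1: "(norm (mat2 a b c d *v v))^2 = p11 * (norm (p12 / of_real A))^2 + p22 * 1 + 2 * ((norm p12)^2 / A)"
      using e[of v] by (simp only: v1 mult_1_right r norm_one power_one)
    have e2: "(norm v)^2 = (norm (p12 / of_real A))^2 + 1" by (simp add: normvec2 v1)
    have e3: "(norm (p12 / of_real A))^2 = (norm p12)^2 / A^2" by (simp add: norm_divide power_divide)
    have "(norm (mat2 a b c d *v v))^2 - (norm v)^2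
        = (p11 - 1) * (norm p12)^2 / A^2 + (p22 - 1) + 2 * (norm p12)^2 / A"
      unfolding e1 e2 e3 by (simp add: algebra_simps diff_divide_distrib)
    also have "\<dots> = ((norm p12)^2 - A * B) / A"
    proof -
      have h: "p11 = 1 - A" "p22 = 1 - B" unfolding A_def B_def by simp_all
      show ?thesis unfolding h using False by (simp add: field_simps power2_eq_square)
    qed
    also have "\<dots> = 0" using AB by simp
    finally have "(norm (mat2 a b c d *v v))^2 = (norm v)^2" by simp
    then have "norm (mat2 a b c d *v v) = norm v" by (simp add: power2_eq_iff_nonneg)
    moreover have "v \<noteq> 0" using v1 by (metis zero_index zero_neq_one)
    ultimately show ?thesis by blast
  qed
qed

lemma mat2_opnorm_le:
  fixes a b c d :: complex and k :: real
  assumes "k \<ge> 0"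
    and "2*k \<ge> (norm a)^2 + (norm c)^2 + (norm b)^2 + (norm d)^2"
    and "k^2 - ((norm a)^2 + (norm c)^2 + (norm b)^2 + (norm d)^2) * k + (norm (a*d - b*c))^2 \<ge> 0"
  shows "mat_opnorm (mat2 a b c d) \<le> sqrt k"
  unfolding mat_opnorm_def
proof (rule onorm_le)
  fix v :: "complex^2"
  have "(norm (mat2 a b c d *v v))^2 \<le> k * (norm v)^2" by (rule mat2_bound[OF assms])
  then have "sqrt ((norm (mat2 a b c d *v v))^2) \<le> sqrt (k * (norm v)^2)"
    using real_sqrt_le_mono by blast
  then show "norm (mat2 a b c d *v v) \<le> sqrt k * norm v"
    by (simp add: real_sqrt_mult)
qed

lemma mat2_opnorm:
  fixes a b c d :: complex
  defines "S \<equiv> (norm a)^2 + (norm c)^2 + (norm b)^2 + (norm d)^2"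
    and "D \<equiv> (norm (a*d - b*c))^2"
  assumes "S \<le> 2" "D \<le> 1" "1 - S + D \<ge> 0"
  shows "mat_opnorm (mat2 a b c d) \<le> 1 \<and> (mat_opnorm (mat2 a b c d) = 1 \<longleftrightarrow> 1 - S + D = 0)"
proof -
  have S0: "S \<ge> 0" unfolding S_def by simp
  have le1: "mat_opnorm (mat2 a b c d) \<le> 1"
    using mat2_opnorm_le[of 1 a c b d] assms unfolding S_def D_def by simp
  moreover have "mat_opnorm (mat2 a b c d) = 1 \<longleftrightarrow> 1 - S + D = 0"
  proof
    assume h: "1 - S + D = 0"
    obtain v where v: "v \<noteq> 0" "norm (mat2 a b c d *v v) = norm v"
      using mat2_attain[of a c b d] h assms unfolding S_def D_def by auto
    have "norm (mat2 a b c d *v v) \<le> mat_opnorm (mat2 a b c d) * norm v"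
      unfolding mat_opnorm_def by (rule onorm) simp
    then have "1 * norm v \<le> mat_opnorm (mat2 a b c d) * norm v" using v by simp
    then have "1 \<le> mat_opnorm (mat2 a b c d)" using v(1)
      by (simp add: mult_le_cancel_right)
    then show "mat_opnorm (mat2 a b c d) = 1" using le1 by simp
  next
    assume h1: "mat_opnorm (mat2 a b c d) = 1"
    show "1 - S + D = 0"
    proof (rule ccontr)
      assume "1 - S + D \<noteq> 0"
      then have dp: "1 - S + D > 0" using assms by simp
      define \<delta> where "\<delta> = 1 - S + D"
      have Sl: "S < 2" using dp assms by simp
      define k where "k = max (S/2) (1 - \<delta>/2)"
      have k1: "k < 1" unfolding k_def using Sl dp \<delta>_def by simp
      have k0: "k \<ge> 0" unfolding k_def using S0 by simp
      have k2: "2*k \<ge> S" unfolding k_def by (auto simp: max_def)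
      have "(1-k) * (1 + k - S) \<le> (\<delta>/2) * 2"
      proof (rule mult_mono)
        show "1 - k \<le> \<delta>/2" unfolding k_def by (auto simp: max_def)
        show "1 + k - S \<le> 2" using k1 S0 by simp
        show "0 \<le> \<delta>/2" using dp \<delta>_def by simp
        show "0 \<le> 1 + k - S" using k2 k1 Sl by simp
      qed
      moreover have "k^2 - S * k + D = \<delta> - (1-k) * (1 + k - S)"
        unfolding \<delta>_def by (simp add: algebra_simps power2_eq_square)
      ultimately have "k^2 - S * k + D \<ge> 0" by simp
      then have "mat_opnorm (mat2 a b c d) \<le> sqrt k"
        using mat2_opnorm_le[of k a c b d] k0 k2 unfolding S_def D_def by simp
      also have "sqrt k < 1" using k1 k0 by simp
      finally show False using h1 by simp
    qed
  qed
  ultimately show ?thesis by blast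
qed



lemma moeb_ident:
  fixes x2 z :: complex
  shows "(norm (1 - x2*z))^2 - (norm (z - cnj x2))^2 = (1 - (norm z)^2) * (1 - (norm x2)^2)"
  unfolding cmod_power2 by (simp add: power2_eq_square algebra_simps)

lemma psi_decomp:
  fixes x1 x2 x3 z :: complex
  assumes "1 - x2 * cnj x2 \<noteq> 0" "x2 * z \<noteq> 1"
  shows "(x3*z - x1)/(x2*z - 1) = (x1 - cnj x2 * x3)/(1 - x2 * cnj x2)
          + (x1*x2 - x3)/(1 - x2 * cnj x2) * ((z - cnj x2)/(1 - x2*z))"
proof -
  have a: "x2*z - 1 \<noteq> 0" "1 - x2*z \<noteq> 0" using assms(2) by auto
  have e: "(x3*z - x1) * (1 - x2 * cnj x2) = (x1 - cnj x2 * x3)*(x2*z - 1) + (x1*x2 - x3)*(cnj x2 - z)"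
    by (simp add: algebra_simps)
  have "(x3*z - x1)/(x2*z - 1) = ((x3*z - x1) * (1 - x2 * cnj x2)) / ((1 - x2 * cnj x2) * (x2*z - 1))"
    using assms(1) by simp
  also have "\<dots> = ((x1 - cnj x2 * x3)*(x2*z - 1) + (x1*x2 - x3)*(cnj x2 - z)) / ((1 - x2 * cnj x2) * (x2*z - 1))"
    using e by simp
  also have "\<dots> = (x1 - cnj x2 * x3)/(1 - x2 * cnj x2) + (x1*x2 - x3)*(cnj x2 - z) / ((1 - x2 * cnj x2) * (x2*z - 1))"
    using assms(1) a by (simp add: add_divide_distrib)
  also have "(x1*x2 - x3)*(cnj x2 - z) / ((1 - x2 * cnj x2) * (x2*z - 1)) = (x1*x2 - x3)/(1 - x2 * cnj x2) * ((z - cnj x2)/(1 - x2*z))"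
  proof -
    have "(cnj x2 - z) / (x2*z - 1) = (z - cnj x2)/(1 - x2*z)"
      by (metis minus_diff_eq minus_divide_divide)
    then show ?thesis by (metis times_divide_times_eq)
  qed
  finally show ?thesis .
qed

lemma moeb_lt1:
  fixes x2 z :: complex
  assumes "norm x2 < 1" "norm z < 1"
  shows "norm ((z - cnj x2)/(1 - x2*z)) < 1" and "x2 * z \<noteq> 1"
proof -
  have "(norm (1 - x2*z))^2 - (norm (z - cnj x2))^2 > 0"
    unfolding moeb_ident using assms
    by (simp add: abs_square_less_1 mult_pos_pos)
  then have lt: "norm (z - cnj x2) < norm (1 - x2*z)"
    by (simp add: power_less_imp_less_base)
  then show "norm ((z - cnj x2)/(1 - x2*z)) < 1"
    by (simp add: norm_divide divide_less_eq)
  show "x2 * z \<noteq> 1" using lt by auto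
qed

lemma moeb_inv:
  fixes x2 v :: complex
  assumes "norm x2 < 1" "norm v < 1"
  defines "z \<equiv> (v + cnj x2)/(1 + x2 * v)"
  shows "norm z < 1" and "(z - cnj x2)/(1 - x2*z) = v"
proof -
  have "(norm (1 - x2*(-v)))^2 - (norm ((-v) - cnj x2))^2 > 0"
    unfolding moeb_ident using assms
    by (simp add: abs_square_less_1 mult_pos_pos)
  then have "(norm (1 + x2 * v))^2 - (norm (v + cnj x2))^2 > 0"
    by (simp add: norm_minus_commute add.commute)
  then have lt: "norm (v + cnj x2) < norm (1 + x2 * v)"
    by (simp add: power_less_imp_less_base)
  then have nz: "1 + x2 * v \<noteq> 0" by auto
  then show "norm z < 1" using lt unfolding z_def
    by (simp add: norm_divide divide_less_eq)
  have t: "1 - x2 * cnj x2 \<noteq> 0"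
  proof
    assume "1 - x2 * cnj x2 = 0"
    then have "x2 * cnj x2 = 1" by simp
    then have "(norm x2)^2 = 1" by (metis complex_norm_square of_real_eq_1_iff)
    then show False using assms(1) by (smt (verit) norm_ge_zero power2_eq_1_iff)
  qed
  have "z - cnj x2 = v * (1 - x2 * cnj x2) / (1 + x2 * v)"
    unfolding z_def using nz by (simp add: field_simps)
  moreover have "1 - x2*z = (1 - x2 * cnj x2) / (1 + x2 * v)"
    unfolding z_def using nz by (simp add: field_simps)
  ultimately show "(z - cnj x2)/(1 - x2*z) = v" using nz t by simp
qed

lemma psi_sup:
  fixes x1 x2 x3 :: complex
  assumes x2: "norm x2 < 1"
  shows "(SUP z\<in>ball 0 1. norm ((x3*z - x1)/(x2*z - 1)))
     = (norm (x1 - cnj x2 * x3) + norm (x1*x2 - x3)) / (1 - (norm x2)^2)"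
proof -
  define t where "t = 1 - (norm x2)^2"
  have tp: "t > 0" unfolding t_def using x2 by (simp add: abs_square_less_1)
  have tc: "1 - x2 * cnj x2 = of_real t"
    unfolding t_def by (simp add: complex_norm_square[symmetric])
  have tc0: "1 - x2 * cnj x2 \<noteq> 0" using tc tp by simp
  define C where "C = (x1 - cnj x2 * x3)/(1 - x2 * cnj x2)"
  define W where "W = (x1*x2 - x3)/(1 - x2 * cnj x2)"
  have nC: "norm C = norm (x1 - cnj x2 * x3) / t" unfolding C_def tc using tp by (simp add: norm_divide)
  have nW: "norm W = norm (x1*x2 - x3) / t" unfolding W_def tc using tp by (simp add: norm_divide)
  define M where "M = norm C + norm W"
  have M: "M = (norm (x1 - cnj x2 * x3) + norm (x1*x2 - x3)) / (1 - (norm x2)^2)"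
    unfolding M_def nC nW t_def by (simp add: add_divide_distrib)
  define f where "f = (\<lambda>z. norm ((x3*z - x1)/(x2*z - 1)))"
  have fz: "f z = norm (C + W * ((z - cnj x2)/(1 - x2*z)))" if "norm z < 1" for z
    unfolding f_def C_def W_def using psi_decomp[OF tc0 moeb_lt1(2)[OF x2 that]] by simp
  have ub: "f z \<le> M" if "z \<in> ball 0 1" for z
  proof -
    have z: "norm z < 1" using that by simp
    have "f z \<le> norm C + norm W * norm ((z - cnj x2)/(1 - x2*z))"
      unfolding fz[OF z] by (metis norm_mult norm_triangle_ineq)
    also have "\<dots> \<le> norm C + norm W * 1"
      using moeb_lt1(1)[OF x2 z] by (intro add_left_mono mult_left_mono) auto
    finally show ?thesis unfolding M_def by simp
  qed
  have bdd: "bdd_above (f ` ball 0 1)" using ub by (auto intro!: bdd_aboveI)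
  have lb: "norm C + s * norm W \<le> (SUP z\<in>ball 0 1. f z)" if s: "0 \<le> s" "s < 1" for s
  proof -
    define e where "e = (if C = 0 then 1 else C / of_real (norm C))"
    define g where "g = (if W = 0 then 1 else of_real (norm W) / W)"
    have ne: "norm e = 1" unfolding e_def by (simp add: norm_divide)
    have ng: "norm g = 1" unfolding g_def by (simp add: norm_divide)
    have Ce: "C = of_real (norm C) * e" unfolding e_def by simp
    have Wg: "W * g = of_real (norm W)" unfolding g_def by simp
    define v where "v = of_real s * e * g"
    have nv: "norm v = s" unfolding v_def using ne ng s by (simp add: norm_mult)
    then have v1: "norm v < 1" using s by simp
    define z where "z = (v + cnj x2)/(1 + x2 * v)"
    have z1: "norm z < 1" and phz: "(z - cnj x2)/(1 - x2*z) = v"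
      unfolding z_def using moeb_inv[OF x2 v1] by auto
    have "C + W * v = of_real (norm C + s * norm W) * e"
      unfolding v_def by (subst Ce) (simp add: algebra_simps Wg[symmetric])
    then have "f z = norm (of_real (norm C + s * norm W) * e)" unfolding fz[OF z1] phz by simp
    also have "\<dots> = \<bar>norm C + s * norm W\<bar>" by (simp only: norm_mult norm_of_real ne mult_1_right)
    also have "\<dots> = norm C + s * norm W" using s by simp
    finally have "f z = norm C + s * norm W" .
    moreover have "f z \<le> (SUP z\<in>ball 0 1. f z)" using z1 bdd by (intro cSUP_upper) auto
    ultimately show ?thesis by simp
  qed
  have "(SUP z\<in>ball 0 1. f z) = M"
  proof (rule antisym)
    show "(SUP z\<in>ball 0 1. f z) \<le> M" using ub by (intro cSUP_least) auto
    show "M \<le> (SUP z\<in>ball 0 1. f z)"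
    proof (rule field_le_epsilon)
      fix \<epsilon> :: real assume ep: "\<epsilon> > 0"
      define s where "s = max 0 (1 - \<epsilon> / (norm W + 1))"
      have s0: "0 \<le> s" and s1: "s < 1" unfolding s_def using ep by (auto simp: max_def intro!: divide_pos_pos add_nonneg_pos)
      have "1 - s \<le> \<epsilon> / (norm W + 1)" unfolding s_def by (auto simp: max_def)
      then have "norm W * (1 - s) \<le> norm W * (\<epsilon> / (norm W + 1))" by (metis mult_left_mono norm_ge_zero)
      also have "\<dots> = \<epsilon> * (norm W / (norm W + 1))" by simp
      also have "\<dots> \<le> \<epsilon> * 1"
        using ep by (intro mult_left_mono) (auto simp: divide_le_eq, smt (verit) norm_ge_zero)
      also have "\<dots> = \<epsilon>" by simp
      finally have "M \<le> norm C + s * norm W + \<epsilon>" unfolding M_def by (simp add: algebra_simps)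
      then show "M \<le> (SUP z\<in>ball 0 1. f z) + \<epsilon>" using lb[OF s0 s1] by simp
    qed
  qed
  then show ?thesis unfolding f_def M by simp
qed



lemma final_alg:
  fixes L t U R A Q B :: real
  assumes L: "0 < L" "L < 1" and B: "0 \<le> B" "B < 1" and t: "t = 1 - B^2" and BA: "B \<le> A"
    and nn: "U \<ge> 0" "R \<ge> 0" "Q \<ge> 0"
    and UR: "U^2 - R^2 = (A^2 - Q^2) * t"
    and tri1: "Q \<le> A*B + R" and tri2: "A - B*Q \<le> U"
    and h: "(U+R)/t \<le> L"
  shows "A^2/L^2 + 2*(R/L) + B^2 \<le> 2 \<and> Q^2/L^2 \<le> 1
      \<and> 1 - (A^2/L^2 + 2*(R/L) + B^2) + Q^2/L^2 \<ge> 0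
      \<and> (1 - (A^2/L^2 + 2*(R/L) + B^2) + Q^2/L^2 = 0 \<longleftrightarrow> (U+R)/t = L)"
proof -
  have tp: "t > 0" using t B by (simp add: abs_square_less_1)
  have h1: "U + R \<le> L * t" using h tp by (simp add: divide_le_eq mult.commute)
  have "A \<le> B*Q + L*t - R" using tri2 h1 by linarith
  also have "\<dots> \<le> B*Q + L*t - (Q - A*B)" using tri1 by linarith
  finally have "(A + Q) * (1 - B) \<le> L * t" by (simp add: algebra_simps)
  also have "L * t = (L * (1 + B)) * (1 - B)" unfolding t by (simp add: algebra_simps power2_eq_square)
  finally have "A + Q \<le> L * (1 + B)" using B by simp
  moreover have "L * B \<le> B" using L B by (simp add: mult_left_le_one_le)
  ultimately have QL: "Q \<le> L" using BA by (simp add: algebra_simps)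
  have D1: "Q^2/L^2 \<le> 1" using QL nn L by (simp add: power_mono divide_le_eq)
  have RLt: "R \<le> L * t" using h1 nn by linarith
  have U2: "U^2 \<le> (L*t - R)^2" using h1 nn by (intro power_mono) auto
  then have "R^2 + (A^2 - Q^2) * t \<le> (L*t - R)^2" using UR by linarith
  then have "(A^2 - Q^2) * t \<le> (L^2 * t - 2 * L * R) * t" by (simp add: power2_eq_square algebra_simps)
  then have k1: "A^2 - Q^2 \<le> L^2 * t - 2 * L * R" using tp by simp
  have eqv: "1 - (A^2/L^2 + 2*(R/L) + B^2) + Q^2/L^2 = ((L^2 * t - 2 * L * R) - (A^2 - Q^2)) / L^2"
    using L unfolding t by (simp add: field_simps power2_eq_square)
  have nonneg: "1 - (A^2/L^2 + 2*(R/L) + B^2) + Q^2/L^2 \<ge> 0" unfolding eqv using k1 by simp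
  have S2: "A^2/L^2 + 2*(R/L) + B^2 \<le> 2" using nonneg D1 by linarith
  have "1 - (A^2/L^2 + 2*(R/L) + B^2) + Q^2/L^2 = 0 \<longleftrightarrow> A^2 - Q^2 = L^2 * t - 2 * L * R"
    unfolding eqv using L by auto
  also have "\<dots> \<longleftrightarrow> U^2 = (L*t - R)^2"
  proof -
    have "(L*t - R)^2 = R^2 + (L^2 * t - 2 * L * R) * t" by (simp add: power2_eq_square algebra_simps)
    then have "U^2 = (L*t - R)^2 \<longleftrightarrow> (A^2 - Q^2) * t = (L^2 * t - 2 * L * R) * t" using UR by linarith
    also have "\<dots> \<longleftrightarrow> A^2 - Q^2 = L^2 * t - 2 * L * R" using tp by simp
    finally show ?thesis by simp
  qed
  also have "\<dots> \<longleftrightarrow> U = L*t - R" using RLt nn by (simp add: power2_eq_iff_nonneg)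
  also have "\<dots> \<longleftrightarrow> (U+R)/t = L" using tp by (auto simp: field_simps)
  finally show ?thesis using S2 D1 nonneg by blast
qed


lemma UR_ident:
  fixes a b q :: complex
  shows "(norm (a - cnj b * q))^2 - (norm (a*b - q))^2 = ((norm a)^2 - (norm q)^2) * (1 - (norm b)^2)"
  unfolding cmod_power2 by (simp add: power2_eq_square algebra_simps)

theorem mainTheorem14:
  fixes n j :: nat and lam0 q0 w :: complex and y0 :: "nat \<Rightarrow> complex"
  assumes "n \<ge> 2"
    and "norm lam0 < 1" and "lam0 \<noteq> 0"
    and "in_Gtilde n y0 q0"
    and "j \<in> {1..n div 2}"
    and "y0 j * y0 (n - j) \<noteq> of_nat (n choose j) ^ 2 * q0"
    and "norm (y0 (n - j)) \<le> norm (y0 j)"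
    and "Phi_Hinf_norm n j y0 q0 \<le> norm lam0"
    and "w ^ 2 = (y0 j * y0 (n - j) - of_nat (n choose j) ^ 2 * q0) / (of_nat (n choose j) ^ 2 * lam0)"
  shows "mat_opnorm (mat2 (y0 j / (of_nat (n choose j) * lam0)) w w (y0 (n - j) / of_nat (n choose j))) \<le> 1
       \<and> (mat_opnorm (mat2 (y0 j / (of_nat (n choose j) * lam0)) w w (y0 (n - j) / of_nat (n choose j))) = 1
            \<longleftrightarrow> Phi_Hinf_norm n j y0 q0 = norm lam0)"
proof -
  have j1: "1 \<le> j" and jn: "j < n" using assms(1,5) by auto
  define cr where "cr = real (n choose j)"
  have crp: "cr > 0" unfolding cr_def using jn by simp
  define cc :: complex where "cc = of_nat (n choose j)"
  have cc: "cc = of_real cr" unfolding cc_def cr_def by simp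
  have cc0: "cc \<noteq> 0" using cc crp by simp
  have ncc: "norm cc = cr" using cc crp by simp
  have q1: "norm q0 < 1" using assms(4) unfolding in_Gtilde_def by simp
  obtain bet :: "nat \<Rightarrow> complex" where bet: "\<forall>i\<in>{1..n-1}. y0 i = bet i + cnj (bet (n - i)) * q0 \<and>
        norm (bet i) + norm (bet (n - i)) < real (n choose i)"
    using assms(4) unfolding in_Gtilde_def by blast
  have "n - j \<in> {1..n-1}" using j1 jn by auto
  with bet have h: "y0 (n-j) = bet (n-j) + cnj (bet (n - (n-j))) * q0 \<and>
        norm (bet (n-j)) + norm (bet (n - (n-j))) < real (n choose (n-j))" by blast
  have e1: "n - (n-j) = j" using jn by simp
  have e2: "n choose (n-j) = n choose j" using jn by (simp add: binomial_symmetric[symmetric])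
  have bnj: "y0 (n-j) = bet (n-j) + cnj (bet j) * q0" "norm (bet (n-j)) + norm (bet j) < cr"
    using h unfolding e1 e2 cr_def by auto
  have "norm (y0 (n-j)) \<le> norm (bet (n-j)) + norm (bet j) * norm q0"
    unfolding bnj(1) by (metis complex_mod_cnj norm_mult norm_triangle_ineq)
  also have "\<dots> \<le> norm (bet (n-j)) + norm (bet j)"
    using q1 mult_left_mono[of "norm q0" 1 "norm (bet j)"] by simp
  finally have ynj: "norm (y0 (n-j)) < cr" using bnj(2) by simp
  define \<alpha> where "\<alpha> = y0 j / cc"
  define \<beta> where "\<beta> = y0 (n-j) / cc"
  have B1: "norm \<beta> < 1" unfolding \<beta>_def using ynj crp ncc by (simp add: norm_divide)
  have BA: "norm \<beta> \<le> norm \<alpha>" unfolding \<alpha>_def \<beta>_def using assms(7) crp ncc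
    by (simp add: norm_divide divide_right_mono)
  have Phi_eq: "Phi n j z y0 q0 = (q0 * z - \<alpha>) / (\<beta> * z - 1)" for z
  proof -
    have "q0 * z - \<alpha> = (cc * q0 * z - y0 j) / cc" unfolding \<alpha>_def using cc0 by (simp add: field_simps)
    moreover have "\<beta> * z - 1 = (y0 (n-j) * z - cc) / cc" unfolding \<beta>_def using cc0 by (simp add: field_simps)
    ultimately have "(q0 * z - \<alpha>) / (\<beta> * z - 1) = (cc * q0 * z - y0 j) / (y0 (n-j) * z - cc)"
      using cc0 by simp
    then show ?thesis using assms(6) unfolding Phi_def cc_def by simp
  qed
  have PH: "Phi_Hinf_norm n j y0 q0 = (norm (\<alpha> - cnj \<beta> * q0) + norm (\<alpha>*\<beta> - q0)) / (1 - (norm \<beta>)^2)"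
    unfolding Phi_Hinf_norm_def Phi_eq using psi_sup[OF B1, of q0 \<alpha>] by simp
  define L where "L = norm lam0"
  have L: "0 < L" "L < 1" unfolding L_def using assms(2,3) by auto
  define A where "A = norm \<alpha>"
  define B where "B = norm \<beta>"
  define Q where "Q = norm q0"
  define U where "U = norm (\<alpha> - cnj \<beta> * q0)"
  define R where "R = norm (\<alpha>*\<beta> - q0)"
  have tri1: "Q \<le> A*B + R"
  proof -
    have "q0 = \<alpha>*\<beta> - (\<alpha>*\<beta> - q0)" by simp
    then have "norm q0 \<le> norm (\<alpha>*\<beta>) + norm (\<alpha>*\<beta> - q0)" by (metis norm_triangle_ineq4)
    then show ?thesis unfolding Q_def A_def B_def R_def by (simp add: norm_mult)
  qed
  have tri2: "A - B*Q \<le> U"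
  proof -
    have "norm \<alpha> - norm (cnj \<beta> * q0) \<le> norm (\<alpha> - cnj \<beta> * q0)" by (rule norm_triangle_ineq2)
    then show ?thesis unfolding Q_def A_def B_def U_def by (simp add: norm_mult)
  qed
  have fa: "A^2/L^2 + 2*(R/L) + B^2 \<le> 2 \<and> Q^2/L^2 \<le> 1
      \<and> 1 - (A^2/L^2 + 2*(R/L) + B^2) + Q^2/L^2 \<ge> 0
      \<and> (1 - (A^2/L^2 + 2*(R/L) + B^2) + Q^2/L^2 = 0 \<longleftrightarrow> (U+R)/(1 - B^2) = L)"
    apply (rule final_alg[OF L, where B=B])
    using B1 BA UR_ident[of \<alpha> \<beta> q0] tri1 tri2 assms(8) PH
    unfolding A_def B_def Q_def U_def R_def L_def by auto
  define a where "a = y0 j / (of_nat (n choose j) * lam0)"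
  define d where "d = y0 (n - j) / of_nat (n choose j)"
  have a: "a = \<alpha> / lam0" unfolding a_def \<alpha>_def cc_def by simp
  have d: "d = \<beta>" unfolding d_def \<beta>_def cc_def by simp
  have w2: "w^2 = (\<alpha>*\<beta> - q0) / lam0"
    unfolding assms(9) \<alpha>_def \<beta>_def cc_def using cc0 assms(3) unfolding cc_def
    by (simp add: field_simps power2_eq_square)
  have nw: "(norm w)^2 = R / L" unfolding R_def L_def
    by (metis norm_divide norm_power w2)
  have det: "a*d - w*w = q0 / lam0" unfolding a d using w2 assms(3)
    by (simp add: power2_eq_square field_simps)
  have S: "(norm a)^2 + (norm w)^2 + (norm w)^2 + (norm d)^2 = A^2/L^2 + 2*(R/L) + B^2"
    unfolding a d nw A_def B_def L_def by (simp add: norm_divide power_divide)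
  have D: "(norm (a*d - w*w))^2 = Q^2/L^2"
    unfolding det Q_def L_def by (simp add: norm_divide power_divide)
  have M: "mat_opnorm (mat2 a w w d) \<le> 1 \<and> (mat_opnorm (mat2 a w w d) = 1 \<longleftrightarrow>
       1 - ((norm a)^2 + (norm w)^2 + (norm w)^2 + (norm d)^2) + (norm (a*d - w*w))^2 = 0)"
    by (rule mat2_opnorm) (use fa S D in simp_all)
  have "Phi_Hinf_norm n j y0 q0 = (U+R)/(1 - B^2)" unfolding PH U_def R_def B_def by simp
  then show ?thesis using M fa unfolding S D a_def[symmetric] d_def[symmetric] L_def by simp
qed

end
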